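(* Let $G$ be a Polish group with a comeager conjugacy class. If $N$ is a normal subgroup of $G$ of index less than $2^{\aleph_0}$, then $N=G$.
   Context: A subset of a Polish space is comeager if it contains a countable intersection of dense open sets. *)

theory Defs
  imports "HOL-Analysis.Analysis" "HOL-Algebra.Algebra"
begin

definition Polish_space :: "'a topology \<Rightarrow> bool" where
  "Polish_space S \<longleftrightarrow> completely_metrizable_space S \<and> separable_space S"

definition topological_group :: "('a, 'b) monoid_scheme \<Rightarrow> 'a topology \<Rightarrow> bool" where
  "topological_group G T \<longleftrightarrow> group G \<and> topspace T = carrier G \<and>
     continuous_map (prod_topology T T) T (\<lambda>(x, y). x \<otimes>\<^bsub>G\<^esub> y) \<and>
     continuous_map T T (\<lambda>x. inv\<^bsub>G\<^esub> x)"

definition Polish_group :: "('a, 'b) monoid_scheme \<Rightarrow> 'a topology \<Rightarrow> bool" where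
  "Polish_group G T \<longleftrightarrow> topological_group G T \<and> Polish_space T"

definition comeager :: "'a topology \<Rightarrow> 'a set \<Rightarrow> bool" where
  "comeager S A \<longleftrightarrow> (\<exists>U :: nat \<Rightarrow> 'a set.
      (\<forall>n. openin S (U n) \<and> S closure_of (U n) = topspace S) \<and> \<Inter> (range U) \<subseteq> A)"

definition conj_class :: "('a, 'b) monoid_scheme \<Rightarrow> 'a \<Rightarrow> 'a set" where
  "conj_class G g = {h \<otimes>\<^bsub>G\<^esub> g \<otimes>\<^bsub>G\<^esub> inv\<^bsub>G\<^esub> h | h. h \<in> carrier G}"

end

theory Submission
  imports Defs
begin

definition dense_in :: "'a topology \<Rightarrow> 'a set \<Rightarrow> bool" where "dense_in S U \<longleftrightarrow> S closure_of U = topspace S"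

lemma tg_div_cont:
  assumes "topological_group G T"
  shows "continuous_map (prod_topology T T) T (\<lambda>(x,y). x \<otimes>\<^bsub>G\<^esub> inv\<^bsub>G\<^esub> y)"
proof -
  have m: "continuous_map (prod_topology T T) T (\<lambda>(x, y). x \<otimes>\<^bsub>G\<^esub> y)"
   and i: "continuous_map T T (\<lambda>x. inv\<^bsub>G\<^esub> x)"
    using assms unfolding topological_group_def by auto
  have p: "continuous_map (prod_topology T T) (prod_topology T T) (\<lambda>p. (fst p, inv\<^bsub>G\<^esub> (snd p)))"
    by (intro continuous_map_pairedI continuous_map_fst continuous_map_compose[OF continuous_map_snd i, unfolded o_def])
  have "(\<lambda>(x,y). x \<otimes>\<^bsub>G\<^esub> inv\<^bsub>G\<^esub> y) = (\<lambda>(x, y). x \<otimes>\<^bsub>G\<^esub> y) \<circ> (\<lambda>p. (fst p, inv\<^bsub>G\<^esub> (snd p)))"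
    by (auto simp: fun_eq_iff)
  then show ?thesis using continuous_map_compose[OF p m] by simp
qed

lemma tg_rmult_cont:
  assumes "topological_group G T" "b \<in> carrier G"
  shows "continuous_map T T (\<lambda>y. y \<otimes>\<^bsub>G\<^esub> b)"
proof -
  have m: "continuous_map (prod_topology T T) T (\<lambda>(x, y). x \<otimes>\<^bsub>G\<^esub> y)"
    using assms unfolding topological_group_def by auto
  have p: "continuous_map T (prod_topology T T) (\<lambda>y. (y, b))"
    using assms unfolding topological_group_def
    by (intro continuous_map_pairedI continuous_map_id[unfolded id_def] continuous_map_const[THEN iffD2]) auto
  show ?thesis using continuous_map_compose[OF p m] by (simp add: o_def)
qed

lemma tg_lmult_cont:
  assumes "topological_group G T" "b \<in> carrier G"
  shows "continuous_map T T (\<lambda>y. b \<otimes>\<^bsub>G\<^esub> y)"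
proof -
  have m: "continuous_map (prod_topology T T) T (\<lambda>(x, y). x \<otimes>\<^bsub>G\<^esub> y)"
    using assms unfolding topological_group_def by auto
  have p: "continuous_map T (prod_topology T T) (\<lambda>y. (b, y))"
    using assms unfolding topological_group_def
    by (intro continuous_map_pairedI continuous_map_id[unfolded id_def] continuous_map_const[THEN iffD2]) auto
  show ?thesis using continuous_map_compose[OF p m] by (simp add: o_def)
qed

lemma tg_pair:
  assumes tg: "topological_group G T" and V1: "openin T V1" "V1 \<noteq> {}" and V2: "openin T V2" "V2 \<noteq> {}"
    and U: "openin T U" "dense_in T U"
  shows "\<exists>A B. openin T A \<and> openin T B \<and> A \<subseteq> V1 \<and> B \<subseteq> V2 \<and> A \<noteq> {} \<and> B \<noteq> {} \<and>
     (\<forall>a\<in>A. \<forall>b\<in>B. a \<otimes>\<^bsub>G\<^esub> inv\<^bsub>G\<^esub> b \<in> U)"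
proof -
  interpret group G using tg unfolding topological_group_def by auto
  have top: "topspace T = carrier G" using tg unfolding topological_group_def by auto
  obtain b where b: "b \<in> V2" using V2 by auto
  have bG: "b \<in> carrier G" using b openin_subset[OF V2(1)] top by auto
  obtain a0 where a0: "a0 \<in> V1" using V1 by auto
  have a0G: "a0 \<in> carrier G" using a0 openin_subset[OF V1(1)] top by auto
  define Ob where "Ob = {y \<in> topspace T. y \<otimes>\<^bsub>G\<^esub> b \<in> V1}"
  have Oo: "openin T Ob" unfolding Ob_def
    by (rule openin_continuous_map_preimage[OF tg_rmult_cont[OF tg bG] V1(1)])
  have "a0 \<otimes>\<^bsub>G\<^esub> inv\<^bsub>G\<^esub> b \<in> Ob" unfolding Ob_def using a0 a0G bG top by (simp add: m_assoc)
  then have "Ob \<noteq> {}" by auto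
  then obtain y where y: "y \<in> U" "y \<in> Ob" using U(2) Oo unfolding dense_in_def dense_intersects_open by blast
  have yG: "y \<in> carrier G" using y Ob_def top by auto
  define a where "a = y \<otimes>\<^bsub>G\<^esub> b"
  have aX: "a \<in> V1" using y unfolding Ob_def a_def by auto
  have ab: "a \<otimes>\<^bsub>G\<^esub> inv\<^bsub>G\<^esub> b = y" unfolding a_def using yG bG by (simp add: m_assoc)
  define W where "W = {p \<in> topspace (prod_topology T T). (\<lambda>(x,y). x \<otimes>\<^bsub>G\<^esub> inv\<^bsub>G\<^esub> y) p \<in> U}"
  have Wo: "openin (prod_topology T T) W" unfolding W_def
    by (rule openin_continuous_map_preimage[OF tg_div_cont[OF tg] U(1)])
  have aG: "a \<in> carrier G" by (simp add: a_def yG bG)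
  have "(a, b) \<in> topspace (prod_topology T T)" using aG bG top by (simp add: topspace_prod_topology)
  then have abW: "(a, b) \<in> W" unfolding W_def using ab y(1) by (simp only: mem_Collect_eq case_prod_conv)
  then obtain A0 B0 where AB: "openin T A0" "openin T B0" "a \<in> A0" "b \<in> B0" "A0 \<times> B0 \<subseteq> W"
    using openin_prod_topology_alt[THEN iffD1, OF Wo, rule_format, OF abW] by auto
  have AB': "\<forall>a'\<in>A0. \<forall>b'\<in>B0. a' \<otimes>\<^bsub>G\<^esub> inv\<^bsub>G\<^esub> b' \<in> U"
  proof (intro ballI)
    fix a' b' assume "a' \<in> A0" "b' \<in> B0"
    then have "(a', b') \<in> W" using AB(5) by blast
    then show "a' \<otimes>\<^bsub>G\<^esub> inv\<^bsub>G\<^esub> b' \<in> U" unfolding W_def by simp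
  qed
  show ?thesis
  proof (intro exI conjI)
    show "openin T (V1 \<inter> A0)" using V1 AB by (simp add: openin_Int)
    show "openin T (V2 \<inter> B0)" using V2 AB by (simp add: openin_Int)
    show "V1 \<inter> A0 \<noteq> {}" using aX AB by blast
    show "V2 \<inter> B0 \<noteq> {}" using b AB by blast
    show "\<forall>a\<in>V1 \<inter> A0. \<forall>b\<in>V2 \<inter> B0. a \<otimes>\<^bsub>G\<^esub> inv\<^bsub>G\<^esub> b \<in> U" using AB' by blast
  qed auto
qed

lemma tg_shrink:
  assumes tg: "topological_group G T" and U: "openin T U" "dense_in T U"
    and I: "finite I" and W: "\<And>i. i \<in> I \<Longrightarrow> openin T (W i) \<and> W i \<noteq> {}"
  shows "\<exists>W'. (\<forall>i\<in>I. openin T (W' i) \<and> W' i \<noteq> {} \<and> W' i \<subseteq> W i) \<and>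
     (\<forall>i\<in>I. \<forall>j\<in>I. i \<noteq> j \<longrightarrow> (\<forall>a\<in>W' i. \<forall>b\<in>W' j. a \<otimes>\<^bsub>G\<^esub> inv\<^bsub>G\<^esub> b \<in> U))"
proof -
  have gen: "\<exists>W'. (\<forall>i\<in>I. openin T (W' i) \<and> W' i \<noteq> {} \<and> W' i \<subseteq> W i) \<and>
     (\<forall>(i,j)\<in>P. (\<forall>a\<in>W' i. \<forall>b\<in>W' j. a \<otimes>\<^bsub>G\<^esub> inv\<^bsub>G\<^esub> b \<in> U))"
    if "finite P" "P \<subseteq> {(i,j). i \<in> I \<and> j \<in> I \<and> i \<noteq> j}" for P
    using that
  proof (induction P rule: finite_induct)
    case empty
    then show ?case using W by (intro exI[of _ W]) auto
  next
    case (insert p P)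
    obtain i j where p: "p = (i,j)" by (cases p)
    have ij: "i \<in> I" "j \<in> I" "i \<noteq> j" using insert(4) p by auto
    obtain W' where W': "\<forall>i\<in>I. openin T (W' i) \<and> W' i \<noteq> {} \<and> W' i \<subseteq> W i"
      "\<forall>(i,j)\<in>P. (\<forall>a\<in>W' i. \<forall>b\<in>W' j. a \<otimes>\<^bsub>G\<^esub> inv\<^bsub>G\<^esub> b \<in> U)"
      using insert by auto
    obtain A B where AB: "openin T A" "openin T B" "A \<subseteq> W' i" "B \<subseteq> W' j" "A \<noteq> {}" "B \<noteq> {}"
      "\<forall>a\<in>A. \<forall>b\<in>B. a \<otimes>\<^bsub>G\<^esub> inv\<^bsub>G\<^esub> b \<in> U"
      using tg_pair[OF tg _ _ _ _ U, of "W' i" "W' j"] W'(1) ij by blast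
    define W'' where "W'' = (\<lambda>k. if k = i then A else if k = j then B else W' k)"
    have sub: "W'' k \<subseteq> W' k" for k using AB unfolding W''_def by auto
    show ?case
    proof (intro exI[of _ W''] conjI)
      show "\<forall>i\<in>I. openin T (W'' i) \<and> W'' i \<noteq> {} \<and> W'' i \<subseteq> W i"
        using W'(1) AB sub unfolding W''_def by (auto simp: subset_iff)
      show "\<forall>(k,l)\<in>insert p P. \<forall>a\<in>W'' k. \<forall>b\<in>W'' l. a \<otimes>\<^bsub>G\<^esub> inv\<^bsub>G\<^esub> b \<in> U"
      proof (rule ballI)
        fix x assume x: "x \<in> insert p P"
        obtain k l where xkl: "x = (k,l)" by (cases x)
        have "a \<otimes>\<^bsub>G\<^esub> inv\<^bsub>G\<^esub> b \<in> U" if kl: "a \<in> W'' k" "b \<in> W'' l" for a b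
        proof (cases "(k,l) = p")
          case True
          then show ?thesis using kl AB ij p unfolding W''_def by auto
        next
          case False
          then have "(k,l) \<in> P" using x xkl by auto
          then show ?thesis using W'(2) kl sub by blast
        qed
        then show "case x of (k,l) \<Rightarrow> \<forall>a\<in>W'' k. \<forall>b\<in>W'' l. a \<otimes>\<^bsub>G\<^esub> inv\<^bsub>G\<^esub> b \<in> U"
          unfolding xkl case_prod_conv by blast
      qed
    qed
  qed
  have "finite {(i,j). i \<in> I \<and> j \<in> I \<and> i \<noteq> j}"
    by (rule finite_subset[of _ "I \<times> I"]) (use I in auto)
  from gen[OF this order_refl] obtain W' where
    W'1: "\<forall>i\<in>I. openin T (W' i) \<and> W' i \<noteq> {} \<and> W' i \<subseteq> W i" and
    W'2: "\<forall>(i,j)\<in>{(i,j). i \<in> I \<and> j \<in> I \<and> i \<noteq> j}. (\<forall>a\<in>W' i. \<forall>b\<in>W' j. a \<otimes>\<^bsub>G\<^esub> inv\<^bsub>G\<^esub> b \<in> U)"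
    by blast
  show ?thesis
  proof (intro exI[of _ W'] conjI)
    show "\<forall>i\<in>I. openin T (W' i) \<and> W' i \<noteq> {} \<and> W' i \<subseteq> W i" by (rule W'1)
  next
    show "\<forall>i\<in>I. \<forall>j\<in>I. i \<noteq> j \<longrightarrow> (\<forall>a\<in>W' i. \<forall>b\<in>W' j. a \<otimes>\<^bsub>G\<^esub> inv\<^bsub>G\<^esub> b \<in> U)"
    proof (intro ballI impI)
    fix i j a b assume ij: "i \<in> I" "j \<in> I" "i \<noteq> j" and ab: "a \<in> W' i" "b \<in> W' j"
    have "(i,j) \<in> {(i,j). i \<in> I \<and> j \<in> I \<and> i \<noteq> j}" using ij by simp
    from bspec[OF W'2 this] ab show "a \<otimes>\<^bsub>G\<^esub> inv\<^bsub>G\<^esub> b \<in> U" by simp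
    qed
  qed
qed

context Metric_space begin

lemma ball_inside:
  assumes "openin mtopology W" "W \<noteq> {}" "0 < e"
  shows "\<exists>c r. c \<in> M \<and> 0 < r \<and> r < e \<and> mcball c r \<subseteq> W"
proof -
  obtain c where c: "c \<in> W" using assms by auto
  obtain r where r: "r > 0" "mball c r \<subseteq> W" using assms(1) c unfolding openin_mtopology by blast
  have cM: "c \<in> M" using assms(1) c unfolding openin_mtopology by blast
  define r' where "r' = min (r/2) (e/2)"
  have "mcball c r' \<subseteq> mball c r" by (rule mcball_subset_mball_concentric) (use r in \<open>simp add: r'_def\<close>)
  then show ?thesis using cM r assms(3) by (intro exI[of _ c] exI[of _ r']) (auto simp: r'_def)
qed

lemma cantor_scheme:
  fixes U :: "nat \<Rightarrow> 'a set"
  assumes comp: "mcomplete" and tg: "topological_group G mtopology"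
    and Uo: "\<And>n. openin mtopology (U n)" and Ud: "\<And>n. dense_in mtopology (U n)"
    and dec: "\<And>m n. m \<le> n \<Longrightarrow> U n \<subseteq> U m"
  shows "\<exists>phi. (\<forall>s::nat set. phi s \<in> M) \<and>
           (\<forall>s t. s \<noteq> t \<longrightarrow> (\<forall>n. phi s \<otimes>\<^bsub>G\<^esub> inv\<^bsub>G\<^esub> (phi t) \<in> U n))"
proof -
  have top: "carrier G = M" using tg unfolding topological_group_def by simp
  have Mne: "M \<noteq> {}"
  proof -
    have "group G" using tg unfolding topological_group_def by simp
    then have "\<one>\<^bsub>G\<^esub> \<in> carrier G" by (simp add: group.is_monoid monoid.one_closed)
    then show ?thesis using top by auto
  qed
  define good where "good = (\<lambda>n (W::bool list \<Rightarrow> 'a set). \<forall>\<tau>. length \<tau> = n \<longrightarrow> openin mtopology (W \<tau>) \<and> W \<tau> \<noteq> {})"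
  define Rl where "Rl = (\<lambda>n (W::bool list \<Rightarrow> 'a set) W'.
     (\<forall>\<tau>. length \<tau> = Suc n \<longrightarrow> (\<exists>c r. c \<in> M \<and> 0<r \<and> r < 1/real (Suc n) \<and> W' \<tau> = mball c r \<and> mcball c r \<subseteq> W (butlast \<tau>))) \<and>
     (\<forall>\<tau> \<tau>'. length \<tau> = Suc n \<and> length \<tau>' = Suc n \<and> \<tau> \<noteq> \<tau>' \<longrightarrow> (\<forall>a\<in>W' \<tau>. \<forall>b\<in>W' \<tau>'. a \<otimes>\<^bsub>G\<^esub> inv\<^bsub>G\<^esub> b \<in> U n)))"
  have step: "\<exists>W'. good (Suc n) W' \<and> Rl n W W'" if g: "good n W" for n W
  proof -
    define I where "I = {\<tau>::bool list. length \<tau> = Suc n}"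
    have Ieq: "I = {xs. set xs \<subseteq> (UNIV::bool set) \<and> length xs = Suc n}" unfolding I_def by blast
    have fI: "finite I" unfolding Ieq by (rule finite_lists_length_eq) simp
    have W0: "openin mtopology (W (butlast \<tau>)) \<and> W (butlast \<tau>) \<noteq> {}" if "\<tau> \<in> I" for \<tau>
    proof -
      have "length (butlast \<tau>) = n" using that unfolding I_def by simp
      then show ?thesis using g unfolding good_def by blast
    qed
    have "\<exists>W1. (\<forall>i\<in>I. openin mtopology (W1 i) \<and> W1 i \<noteq> {} \<and> W1 i \<subseteq> W (butlast i)) \<and>
       (\<forall>i\<in>I. \<forall>j\<in>I. i \<noteq> j \<longrightarrow> (\<forall>a\<in>W1 i. \<forall>b\<in>W1 j. a \<otimes>\<^bsub>G\<^esub> inv\<^bsub>G\<^esub> b \<in> U n))"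
      by (rule tg_shrink[OF tg Uo[of n] Ud[of n] fI W0])
    then obtain W1 where W1c: "(\<forall>i\<in>I. openin mtopology (W1 i) \<and> W1 i \<noteq> {} \<and> W1 i \<subseteq> W (butlast i)) \<and>
       (\<forall>i\<in>I. \<forall>j\<in>I. i \<noteq> j \<longrightarrow> (\<forall>a\<in>W1 i. \<forall>b\<in>W1 j. a \<otimes>\<^bsub>G\<^esub> inv\<^bsub>G\<^esub> b \<in> U n))"
      by (rule exE)
    note W1 = conjunct1[OF W1c] conjunct2[OF W1c]
    have e: "(0::real) < 1/real (Suc n)" by simp
    have "\<forall>\<tau>\<in>I. \<exists>c r. c \<in> M \<and> 0 < r \<and> r < 1/real (Suc n) \<and> mcball c r \<subseteq> W1 \<tau>"
      using W1(1) ball_inside[OF _ _ e] by blast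
    then obtain c r where cr: "\<forall>\<tau>\<in>I. c \<tau> \<in> M \<and> 0 < r \<tau> \<and> r \<tau> < 1/real (Suc n) \<and> mcball (c \<tau>) (r \<tau>) \<subseteq> W1 \<tau>"
      by metis
    define W' where "W' = (\<lambda>\<tau>. mball (c \<tau>) (r \<tau>))"
    show ?thesis
    proof (intro exI[of _ W'] conjI)
      show "good (Suc n) W'" unfolding good_def W'_def using cr I_def by auto
      show "Rl n W W'" unfolding Rl_def
      proof (intro conjI allI impI)
        fix \<tau> :: "bool list" assume "length \<tau> = Suc n"
        then have "\<tau> \<in> I" by (simp add: I_def)
        then show "\<exists>c r. c \<in> M \<and> 0<r \<and> r < 1/real (Suc n) \<and> W' \<tau> = mball c r \<and> mcball c r \<subseteq> W (butlast \<tau>)"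
          using cr W1(1) by (intro exI[of _ "c \<tau>"] exI[of _ "r \<tau>"]) (auto simp: W'_def)
      next
        fix \<tau> \<tau>' :: "bool list" assume "length \<tau> = Suc n \<and> length \<tau>' = Suc n \<and> \<tau> \<noteq> \<tau>'"
        then have tt: "\<tau> \<in> I" "\<tau>' \<in> I" "\<tau> \<noteq> \<tau>'" by (auto simp: I_def)
        have s1: "W' \<tau> \<subseteq> W1 \<tau>" using cr tt(1) mball_subset_mcball unfolding W'_def by blast
        have s2: "W' \<tau>' \<subseteq> W1 \<tau>'" using cr tt(2) mball_subset_mcball unfolding W'_def by blast
        show "\<forall>a\<in>W' \<tau>. \<forall>b\<in>W' \<tau>'. a \<otimes>\<^bsub>G\<^esub> inv\<^bsub>G\<^esub> b \<in> U n"
          using W1(2) tt s1 s2 by blast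
      qed
    qed
  qed
  define Sq where "Sq = rec_nat (\<lambda>_. M) (\<lambda>n W. SOME W'. good (Suc n) W' \<and> Rl n W W')"
  have S0: "Sq 0 = (\<lambda>_. M)" unfolding Sq_def by simp
  have SS: "Sq (Suc n) = (SOME W'. good (Suc n) W' \<and> Rl n (Sq n) W')" for n unfolding Sq_def by simp
  have Sgood: "good n (Sq n)" for n
  proof (induction n)
    case 0
    show ?case unfolding good_def S0 using Mne by (metis openin_topspace topspace_mtopology)
  next
    case (Suc n)
    show ?case using someI_ex[OF step[OF Suc]] unfolding SS by blast
  qed
  have Srel: "Rl n (Sq n) (Sq (Suc n))" for n using someI_ex[OF step[OF Sgood[of n]]] unfolding SS by blast
  define pfx where "pfx = (\<lambda>(s::nat set) n. map (\<lambda>i. i \<in> s) [0..<n])"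
  have pfx_len: "length (pfx s n) = n" for s n by (simp add: pfx_def)
  have pfx_but: "butlast (pfx s (Suc n)) = pfx s n" for s n by (simp add: pfx_def)
  define V where "V = (\<lambda>s n. Sq n (pfx s n))"
  have Vball: "\<exists>c r. c \<in> M \<and> 0<r \<and> r < 1/real (Suc n) \<and> V s (Suc n) = mball c r \<and> mcball c r \<subseteq> V s n" for s n
    using Srel[of n] pfx_len[of s "Suc n"] pfx_but[of s n] unfolding Rl_def V_def by metis
  have Vgood: "openin mtopology (V s n) \<and> V s n \<noteq> {}" for s n
    using Sgood[of n] pfx_len[of s n] unfolding good_def V_def by blast
  have Vsub: "V s n \<subseteq> M" for s n using Vgood[of s n] openin_subset by fastforce
  have V0: "V s 0 = M" for s unfolding V_def S0 by simp
  have point: "\<exists>p. p \<in> M \<and> (\<forall>n. p \<in> V s n)" for s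
  proof -
    define K where "K = (\<lambda>n. mtopology closure_of V s (Suc n))"
    have Kcl: "closedin mtopology (K n)" for n unfolding K_def by simp
    have VK: "V s (Suc n) \<subseteq> K n" for n unfolding K_def by (rule closure_of_subset) (simp add: Vsub)
    have Kball: "\<exists>c r. r < 1/real (Suc n) \<and> K n \<subseteq> mcball c r \<and> mcball c r \<subseteq> V s n" for n
    proof -
      obtain c r where cr: "c \<in> M" "0<r" "r < 1/real (Suc n)" "V s (Suc n) = mball c r" "mcball c r \<subseteq> V s n"
        using Vball[of n s] by blast
      have "K n \<subseteq> mcball c r" unfolding K_def cr(4)
        by (rule closure_of_minimal) (auto simp: mball_subset_mcball)
      then show ?thesis using cr by blast
    qed
    have KV: "K (Suc n) \<subseteq> V s (Suc n)" for n using Kball[of "Suc n"] by blast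
    have Kne: "K n \<noteq> {}" for n using VK[of n] Vgood[of s "Suc n"] by blast
    have Kdec: "decseq K"
    proof (rule decseq_SucI)
      fix n show "K (Suc n) \<le> K n" using KV[of n] VK[of n] by blast
    qed
    have Ksmall: "\<forall>e>0. \<exists>n a. K n \<subseteq> mcball a e"
    proof (intro allI impI)
      fix e :: real assume "e > 0"
      then obtain n where n: "n \<noteq> 0" "inverse (real n) < e" using real_arch_inverse by blast
      obtain c r where cr: "r < 1/real (Suc n)" "K n \<subseteq> mcball c r" using Kball[of n] by blast
      have "1/real (Suc n) \<le> inverse (real n)" using n(1) by (simp add: divide_simps)
      then have "r \<le> e" using cr(1) n(2) by linarith
      then have "K n \<subseteq> mcball c e" using cr(2) mcball_subset_concentric by blast
      then show "\<exists>n a. K n \<subseteq> mcball a e" by blast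
    qed
    have "\<Inter> (range K) \<noteq> {}" using comp unfolding mcomplete_nest using Kcl Kne Kdec Ksmall by blast
    then obtain p where p: "\<And>n. p \<in> K n" by blast
    have pM: "p \<in> M" using p[of 0] closure_of_subset_topspace[of mtopology] unfolding K_def by fastforce
    have "p \<in> V s n" for n
    proof (cases n)
      case 0 then show ?thesis using pM V0 by simp
    next
      case (Suc m) then show ?thesis using p[of "Suc m"] KV[of m] by blast
    qed
    then show ?thesis using pM by blast
  qed
  then obtain phi where phi: "\<And>s. phi s \<in> M" "\<And>s n. phi s \<in> V s n" by metis
  show ?thesis
  proof (intro exI[of _ phi] conjI allI impI)
    fix s show "phi s \<in> M" by (rule phi(1))
  next
    fix s t :: "nat set" and n assume "s \<noteq> t"
    then obtain m where m: "(m \<in> s) \<noteq> (m \<in> t)" by blast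
    define k where "k = max n m"
    have "pfx s (Suc k) ! m \<noteq> pfx t (Suc k) ! m" using m unfolding pfx_def k_def
      by (simp add: nth_map less_Suc_eq_le del: upt_Suc)
    then have ne: "pfx s (Suc k) \<noteq> pfx t (Suc k)" by metis
    have "phi s \<otimes>\<^bsub>G\<^esub> inv\<^bsub>G\<^esub> (phi t) \<in> U k"
      using conjunct2[OF Srel[of k, unfolded Rl_def], rule_format, OF conjI[OF pfx_len conjI[OF pfx_len ne]]]
        phi(2)[of s "Suc k"] phi(2)[of t "Suc k"] unfolding V_def by blast
    then show "phi s \<otimes>\<^bsub>G\<^esub> inv\<^bsub>G\<^esub> (phi t) \<in> U n" using dec[of n k] unfolding k_def by auto
  qed
qed

end

theorem lemma6p4:
  fixes G :: "('a, 'b) monoid_scheme" and T :: "'a topology" and N :: "'a set"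
  assumes "Polish_group G T"
    and "\<exists>g \<in> carrier G. comeager T (conj_class G g)"
    and "N \<lhd> G"
    and "(card_of (rcosets\<^bsub>G\<^esub> N), card_of (UNIV :: nat set set)) \<in> ordLess"
  shows "N = carrier G"
proof -
  have tg: "topological_group G T" and pol: "Polish_space T"
    using assms(1) unfolding Polish_group_def by auto
  interpret group G using tg unfolding topological_group_def by auto
  interpret normal N G by (rule assms(3))
  have top: "topspace T = carrier G" using tg unfolding topological_group_def by auto
  have cms: "completely_metrizable_space T" using pol unfolding Polish_space_def by auto
  obtain g where g: "g \<in> carrier G" "comeager T (conj_class G g)" using assms(2) by blast
  obtain U :: "nat \<Rightarrow> 'a set" where U: "\<forall>n. openin T (U n) \<and> T closure_of (U n) = topspace T"
    and UC: "\<Inter> (range U) \<subseteq> conj_class G g"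
    using g(2) unfolding comeager_def by (elim exE conjE) blast
  have Uo: "openin T (U n)" for n using U by blast
  have Ud: "dense_in T (U n)" for n using U unfolding dense_in_def by blast
  have Nsub: "N \<subseteq> carrier G" using subset .
  have sgN: "subgroup N G" using assms(3) normal_imp_subgroup by blast
  have Cclass: "\<exists>k\<in>carrier G. x = k \<otimes>\<^bsub>G\<^esub> g \<otimes>\<^bsub>G\<^esub> inv\<^bsub>G\<^esub> k" if "x \<in> conj_class G g" for x
    using that unfolding conj_class_def by blast
  have Tne: "topspace T \<noteq> {}" using top by auto
  have gN: "g \<in> N"
  proof (rule ccontr)
    assume gn: "g \<notin> N"
    define U' where "U' = (\<lambda>n. \<Inter> (U ` {..n}))"
    have U'o: "openin T (U' n)" for n unfolding U'_def
      by (rule openin_Inter) (auto simp: Uo)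
    have U'd: "dense_in T (U' n)" for n unfolding U'_def dense_in_def
      by (rule Baire_category) (use cms Uo Ud in \<open>auto simp: dense_in_def\<close>)
    have U'dec: "U' n \<subseteq> U' m" if "m \<le> n" for m n unfolding U'_def using that by auto
    have U'U: "U' n \<subseteq> U n" for n unfolding U'_def by auto
    obtain M d where md: "Metric_space M d" "Metric_space.mcomplete M d" "T = Metric_space.mtopology M d"
      using cms unfolding completely_metrizable_space_def by blast
    have MG: "M = carrier G" using top md(3) Metric_space.topspace_mtopology[OF md(1)] by simp
    have tgM: "topological_group G (Metric_space.mtopology M d)" using tg md(3) by simp
    have U'oM: "\<And>n. openin (Metric_space.mtopology M d) (U' n)" using U'o md(3) by simp
    have U'dM: "\<And>n. dense_in (Metric_space.mtopology M d) (U' n)" using U'd md(3) by simp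
    have "\<exists>phi. (\<forall>s::nat set. phi s \<in> M) \<and>
           (\<forall>s t. s \<noteq> t \<longrightarrow> (\<forall>n. phi s \<otimes>\<^bsub>G\<^esub> inv\<^bsub>G\<^esub> (phi t) \<in> U' n))"
      by (rule Metric_space.cantor_scheme[OF md(1) md(2) tgM U'oM U'dM U'dec])
    then obtain phi where phiM: "\<forall>s::nat set. phi s \<in> M"
      and phiU: "\<forall>s t. s \<noteq> t \<longrightarrow> (\<forall>n. phi s \<otimes>\<^bsub>G\<^esub> inv\<^bsub>G\<^esub> (phi t) \<in> U' n)"
      by (elim exE conjE)
    have phiG: "phi s \<in> carrier G" for s using phiM MG by auto
    have phiC: "phi s \<otimes>\<^bsub>G\<^esub> inv\<^bsub>G\<^esub> (phi t) \<in> conj_class G g" if "s \<noteq> t" for s t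
    proof -
      have "phi s \<otimes>\<^bsub>G\<^esub> inv\<^bsub>G\<^esub> (phi t) \<in> U n" for n
        using phiU that U'U[of n] by blast
      then have "phi s \<otimes>\<^bsub>G\<^esub> inv\<^bsub>G\<^esub> (phi t) \<in> \<Inter> (range U)" by simp
      then show ?thesis using UC by (rule subsetD[rotated])
    qed
    define F where "F = (\<lambda>s. N #>\<^bsub>G\<^esub> phi s)"
    have injF: "inj_on F UNIV"
    proof (rule inj_onI)
      fix s t assume eq: "F s = F t"
      show "s = t"
      proof (rule ccontr)
        assume st: "s \<noteq> t"
        have ps: "phi s \<in> N #>\<^bsub>G\<^esub> phi s" by (rule rcos_self[OF phiG sgN])
        have eq': "N #>\<^bsub>G\<^esub> phi s = N #>\<^bsub>G\<^esub> phi t" using eq unfolding F_def .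
        have "phi s \<in> N #>\<^bsub>G\<^esub> phi t" using ps unfolding eq' .
        then obtain h where h: "h \<in> N" "phi s = h \<otimes>\<^bsub>G\<^esub> phi t" unfolding r_coset_def by blast
        have hG: "h \<in> carrier G" using h Nsub by auto
        have "phi s \<otimes>\<^bsub>G\<^esub> inv\<^bsub>G\<^esub> (phi t) = h" using h(2) hG phiG by (simp add: m_assoc)
        then have inN: "phi s \<otimes>\<^bsub>G\<^esub> inv\<^bsub>G\<^esub> (phi t) \<in> N" using h by simp
        obtain k where k: "k \<in> carrier G" "phi s \<otimes>\<^bsub>G\<^esub> inv\<^bsub>G\<^esub> (phi t) = k \<otimes>\<^bsub>G\<^esub> g \<otimes>\<^bsub>G\<^esub> inv\<^bsub>G\<^esub> k"
          using Cclass[OF phiC[OF st]] by blast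
        have c1: "inv\<^bsub>G\<^esub> k \<otimes>\<^bsub>G\<^esub> (k \<otimes>\<^bsub>G\<^esub> z) = z" if "z \<in> carrier G" for z
          using that k(1) by (simp add: m_assoc[symmetric])
        have "inv\<^bsub>G\<^esub> k \<otimes>\<^bsub>G\<^esub> (k \<otimes>\<^bsub>G\<^esub> g \<otimes>\<^bsub>G\<^esub> inv\<^bsub>G\<^esub> k) \<otimes>\<^bsub>G\<^esub> k \<in> N"
          using inv_op_closed1[OF k(1)] inN k(2) by simp
        moreover have "inv\<^bsub>G\<^esub> k \<otimes>\<^bsub>G\<^esub> (k \<otimes>\<^bsub>G\<^esub> g \<otimes>\<^bsub>G\<^esub> inv\<^bsub>G\<^esub> k) \<otimes>\<^bsub>G\<^esub> k = g"
          using k(1) g(1) by (simp add: m_assoc c1)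
        ultimately show False using gn by simp
      qed
    qed
    have "F ` UNIV \<subseteq> rcosets\<^bsub>G\<^esub> N" unfolding F_def using rcosetsI[OF Nsub phiG] by blast
    then have "card_of (UNIV :: nat set set) \<le>o card_of (rcosets\<^bsub>G\<^esub> N)"
      using injF card_of_ordLeq by blast
    then show False using assms(4) not_ordLess_ordLeq by blast
  qed
  have CN: "conj_class G g \<subseteq> N"
  proof
    fix x assume "x \<in> conj_class G g"
    then obtain k where "k \<in> carrier G" "x = k \<otimes>\<^bsub>G\<^esub> g \<otimes>\<^bsub>G\<^esub> inv\<^bsub>G\<^esub> k" using Cclass by blast
    then show "x \<in> N" using inv_op_closed2 gN by simp
  qed
  show ?thesis
  proof
    show "N \<subseteq> carrier G" by (rule Nsub)
    show "carrier G \<subseteq> N"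
    proof
      fix x assume x: "x \<in> carrier G"
      have ix: "inv\<^bsub>G\<^esub> x \<in> carrier G" using x by simp
      define Ux where "Ux = (\<lambda>n. {y \<in> topspace T. inv\<^bsub>G\<^esub> x \<otimes>\<^bsub>G\<^esub> y \<in> U n})"
      have Uxo: "openin T (Ux n)" for n unfolding Ux_def
        by (rule openin_continuous_map_preimage[OF tg_lmult_cont[OF tg ix] Uo])
      have Uxd: "dense_in T (Ux n)" for n
        unfolding dense_in_def dense_intersects_open
      proof (intro allI impI)
        fix Ob assume Ob: "openin T Ob \<and> Ob \<noteq> {}"
        define O' where "O' = {y \<in> topspace T. x \<otimes>\<^bsub>G\<^esub> y \<in> Ob}"
        have O'o: "openin T O'" unfolding O'_def
          by (rule openin_continuous_map_preimage[OF tg_lmult_cont[OF tg x]]) (use Ob in blast)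
        obtain o1 where o1: "o1 \<in> Ob" using Ob by blast
        have o1G: "o1 \<in> carrier G" using o1 Ob openin_subset top by blast
        have "inv\<^bsub>G\<^esub> x \<otimes>\<^bsub>G\<^esub> o1 \<in> O'" unfolding O'_def using o1 o1G x top
          by (simp add: m_assoc[symmetric])
        then have "O' \<noteq> {}" by blast
        then obtain u where u: "u \<in> U n" "u \<in> O'"
          using Ud[of n] O'o unfolding dense_in_def dense_intersects_open by blast
        have uG: "u \<in> carrier G" using u(2) top unfolding O'_def by blast
        have "x \<otimes>\<^bsub>G\<^esub> u \<in> Ux n" unfolding Ux_def using u uG x top
          by (simp add: m_assoc[symmetric])
        moreover have "x \<otimes>\<^bsub>G\<^esub> u \<in> Ob" using u(2) unfolding O'_def by blast
        ultimately show "Ux n \<inter> Ob \<noteq> {}" by blast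
      qed
      have "T closure_of \<Inter> (range U \<union> range Ux) = topspace T"
        by (rule Baire_category) (use cms Uo Ud Uxo Uxd in \<open>auto simp: dense_in_def\<close>)
      then have "\<Inter> (range U \<union> range Ux) \<noteq> {}" using Tne by (metis closure_of_empty)
      then obtain y where y: "\<And>n. y \<in> U n" "\<And>n. y \<in> Ux n" by blast
      have yU: "y \<in> \<Inter> (range U)" using y(1) by simp
      have yN: "y \<in> N" using subsetD[OF CN subsetD[OF UC yU]] .
      have "inv\<^bsub>G\<^esub> x \<otimes>\<^bsub>G\<^esub> y \<in> U n" for n using y(2)[of n] unfolding Ux_def by simp
      then have xyU: "inv\<^bsub>G\<^esub> x \<otimes>\<^bsub>G\<^esub> y \<in> \<Inter> (range U)" by simp
      have xyN: "inv\<^bsub>G\<^esub> x \<otimes>\<^bsub>G\<^esub> y \<in> N" using subsetD[OF CN subsetD[OF UC xyU]] .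
      have yG: "y \<in> carrier G" using yN Nsub by blast
      have "inv\<^bsub>G\<^esub> x \<otimes>\<^bsub>G\<^esub> y \<otimes>\<^bsub>G\<^esub> inv\<^bsub>G\<^esub> y \<in> N"
        by (rule subgroup.m_closed[OF sgN xyN subgroup.m_inv_closed[OF sgN yN]])
      moreover have "inv\<^bsub>G\<^esub> x \<otimes>\<^bsub>G\<^esub> y \<otimes>\<^bsub>G\<^esub> inv\<^bsub>G\<^esub> y = inv\<^bsub>G\<^esub> x" using x yG by (simp add: m_assoc)
      ultimately have "inv\<^bsub>G\<^esub> x \<in> N" by simp
      then have "inv\<^bsub>G\<^esub> (inv\<^bsub>G\<^esub> x) \<in> N" using sgN subgroup.m_inv_closed by blast
      then show "x \<in> N" using x by simp
    qed
  qed
qed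

end
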